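(* Let $f\in C^1(\mathbb{R}^n,\mathbb{R}^n)$, $g\in C(\mathbb{R}\times\mathbb{R}^n\times[0,1],\mathbb{R}^n)$, and let $x_0$ be a nondegenerate $T$-periodic limit cycle of $\dot x=f(x)$ whose least period is $T>0$. Let $\{x_\varepsilon\}_{\varepsilon\in(0,1]}$ be $T$-periodic solutions of $\dot x=f(x)+\varepsilon g(t,x,\varepsilon)$ with $\|x_\varepsilon(t)-x_0(t)\|\to0$ as $\varepsilon\to0$ uniformly in $t\in[0,T]$. Suppose there is an eigenfunction $z$ of $\dot z=-(f'(x_0(t)))^*z$ which is not $T$-periodic, with multiplier $\rho$, such that $M^\perp_z(0):=\frac{\rho}{\rho-1}\int_{-T}^0\langle z(s),g(s,x_0(s),0)\rangle ds\neq0$. Then for all sufficiently small $\varepsilon>0$, $x_\varepsilon(t)\neq x_0(0)$ for every $t\in[0,T]$.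
   Context: Nondegenerate: the characteristic multiplier $+1$ of $\dot y=f'(x_0(t))y$ (eigenvalue $1$ of $Y(T)$, $Y(0)=I$) has algebraic multiplicity $1$. An eigenfunction of a linear $T$-periodic system is a nonzero solution $z$ with $z(t+T)=\rho z(t)$ for all $t$ and some $\rho\in\mathbb{R}$ (its characteristic multiplier). *)

theory Defs
  imports "HOL-Analysis.Analysis" "HOL-Computational_Algebra.Polynomial"
begin

definition charpoly_mat :: "real^'n^'n \<Rightarrow> real poly" where
  "charpoly_mat A = det (\<chi> i j. (if i = j then [:0, 1:] else 0) - [:A $ i $ j:])"

definition alg_mult :: "real^'n^'n \<Rightarrow> real \<Rightarrow> nat" where
  "alg_mult A lam = order lam (charpoly_mat A)"

definition periodic_orbit_least :: "(real^'n \<Rightarrow> real^'n) \<Rightarrow> (real \<Rightarrow> real^'n) \<Rightarrow> real \<Rightarrow> bool" where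
  "periodic_orbit_least f x0 T \<longleftrightarrow> T > 0 \<and>
     (\<forall>t. (x0 has_vector_derivative f (x0 t)) (at t)) \<and>
     (\<forall>t. x0 (t + T) = x0 t) \<and>
     (\<forall>s. 0 < s \<and> s < T \<longrightarrow> (\<exists>t. x0 (t + s) \<noteq> x0 t))"

definition nondegenerate_cycle :: "(real^'n \<Rightarrow> real^'n^'n) \<Rightarrow> (real \<Rightarrow> real^'n) \<Rightarrow> real \<Rightarrow> bool" where
  "nondegenerate_cycle Df x0 T \<longleftrightarrow>
     (\<exists>Y :: real \<Rightarrow> real^'n^'n. Y 0 = mat 1 \<and>
        (\<forall>t. (Y has_vector_derivative (Df (x0 t) ** Y t)) (at t)) \<and>
        alg_mult (Y T) 1 = 1)"

definition eigenfunction :: "(real \<Rightarrow> real^'n^'n) \<Rightarrow> real \<Rightarrow> (real \<Rightarrow> real^'n) \<Rightarrow> real \<Rightarrow> bool" where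
  "eigenfunction A T z rho \<longleftrightarrow>
     (\<forall>t. (z has_vector_derivative (A t *v z t)) (at t)) \<and>
     (\<exists>t. z t \<noteq> 0) \<and>
     (\<forall>t. z (t + T) = rho *\<^sub>R z t)"

end

theory Submission
  imports Defs
begin


lemma per_nat: fixes p :: "real \<Rightarrow> 'a" and T :: real assumes "\<And>t. p (t + T) = p t" shows "p (t + real n * T) = p t"
proof (induction n arbitrary: t)
  case 0 then show ?case by simp
next
  case (Suc n)
  have "p (t + real (Suc n) * T) = p ((t + real n * T) + T)" by (simp add: algebra_simps)
  also have "\<dots> = p t" using assms Suc by simp
  finally show ?case .
qed

lemma per_int: fixes p :: "real \<Rightarrow> 'a" and T :: real assumes "\<And>t. p (t + T) = p t" shows "p (t + of_int k * T) = p t"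
proof (cases "k \<ge> 0")
  case True
  define n where "n = nat k"
  have "k = int n" using True unfolding n_def by simp
  then show ?thesis using per_nat[where p=p and T=T, OF assms] by simp
next
  case False
  define n where "n = nat (- k)"
  have k: "k = - int n" using False unfolding n_def by simp
  have "p t = p ((t + of_int k * T) + real n * T)" by (simp add: k algebra_simps)
  also have "\<dots> = p (t + of_int k * T)" by (rule per_nat[where p=p and T=T, OF assms])
  finally show ?thesis by simp
qed

definition red :: "real \<Rightarrow> real \<Rightarrow> real" where "red T t = t - of_int \<lfloor>t / T\<rfloor> * T"

lemma red_range: assumes "T > 0" shows "0 \<le> red T t" "red T t < T"
proof -
  have a: "of_int \<lfloor>t / T\<rfloor> \<le> t / T" "t / T < of_int \<lfloor>t / T\<rfloor> + 1" by linarith+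
  from a(1) have "of_int \<lfloor>t / T\<rfloor> * T \<le> t" using assms by (metis pos_le_divide_eq)
  then show "0 \<le> red T t" unfolding red_def by simp
  from a(2) have "t < (of_int \<lfloor>t / T\<rfloor> + 1) * T" using assms by (metis pos_divide_less_eq)
  then show "red T t < T" unfolding red_def by (simp add: algebra_simps)
qed

lemma per_red: fixes p :: "real \<Rightarrow> 'a" and T :: real assumes "\<And>t. p (t + T) = p t" shows "p t = p (red T t)"
  using per_int[where p=p and T=T, OF assms, of "red T t" "\<lfloor>t / T\<rfloor>"] unfolding red_def by simp

lemma gronwall_core:
  fixes \<phi> :: "real \<Rightarrow> real"
  assumes cont: "continuous_on {a..b} \<phi>" and L: "L \<ge> 0"
    and le: "\<And>t. t \<in> {a..b} \<Longrightarrow> \<phi> t \<le> c + L * integral {a..t} \<phi>"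
    and t: "t \<in> {a..b}"
  shows "\<phi> t \<le> c * exp (L * (t - a))"
proof -
  define U where "U u = integral {a..u} \<phi>" for u
  define V where "V u = exp (- L * (u - a)) * (c + L * U u)" for u
  have dU: "(U has_real_derivative \<phi> u) (at u within {a..b})" if "u \<in> {a..b}" for u
    using integral_has_vector_derivative[OF cont that] unfolding U_def has_real_derivative_iff_has_vector_derivative .
  have dV: "(V has_real_derivative (exp (- L * (u - a)) * (L * \<phi> u - L * (c + L * U u)))) (at u within {a..b})"
    if "u \<in> {a..b}" for u
  proof -
    have e: "((\<lambda>u. exp (- L * (u - a))) has_real_derivative exp (- L * (u - a)) * (- L)) (at u within {a..b})"
      by (auto intro!: derivative_eq_intros)
    have h: "((\<lambda>u. c + L * U u) has_real_derivative L * \<phi> u) (at u within {a..b})"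
      using dU[OF that] by (auto intro!: derivative_eq_intros)
    show ?thesis unfolding V_def
      by (rule DERIV_cong[OF DERIV_mult[OF e h]]) (simp add: algebra_simps)
  qed
  have contV: "continuous_on {a..t} V"
  proof -
    have "continuous_on {a..b} V"
      using dV unfolding continuous_on_eq_continuous_within by (meson DERIV_continuous)
    then show ?thesis by (rule continuous_on_subset) (use t in auto)
  qed
  have "V t \<le> V a"
  proof (rule DERIV_nonpos_imp_decreasing_open[of a t V])
    show "a \<le> t" using t by simp
    fix x assume x: "a < x" "x < t"
    then have xi: "x \<in> {a..b}" using t by auto
    have "x \<in> interior {a..b}" using x t by auto
    then have "at x within {a..b} = at x" by (rule at_within_interior)
    then have "(V has_real_derivative (exp (- L * (x - a)) * (L * \<phi> x - L * (c + L * U x)))) (at x)"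
      using dV[OF xi] by simp
    moreover have "exp (- L * (x - a)) * (L * \<phi> x - L * (c + L * U x)) \<le> 0"
    proof -
      have "L * \<phi> x \<le> L * (c + L * U x)" using le[OF xi] L unfolding U_def by (simp add: mult_left_mono)
      then show ?thesis by (simp add: mult_nonneg_nonpos)
    qed
    ultimately show "\<exists>y. (V has_real_derivative y) (at x) \<and> y \<le> 0" by blast
  qed (rule contV)
  also have "V a = c" unfolding V_def U_def by simp
  finally have "exp (- L * (t - a)) * (c + L * U t) \<le> c" unfolding V_def .
  then have "exp (L * (t - a)) * (exp (- L * (t - a)) * (c + L * U t)) \<le> exp (L * (t - a)) * c"
    by (simp add: mult_left_mono)
  moreover have "exp (L * (t - a)) * (exp (- L * (t - a)) * (c + L * U t)) = c + L * U t"
    by (simp add: exp_minus)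
  ultimately have "c + L * U t \<le> c * exp (L * (t - a))" by (metis mult.commute)
  then show ?thesis using le[OF t] unfolding U_def by simp
qed

lemma gronwall_vec:
  fixes w w' :: "real \<Rightarrow> 'v::banach"
  assumes ab: "a \<le> b"
    and d: "\<And>s. s \<in> {a..b} \<Longrightarrow> (w has_vector_derivative w' s) (at s within {a..b})"
    and bnd: "\<And>s. s \<in> {a..b} \<Longrightarrow> norm (w' s) \<le> L * norm (w s) + \<beta>"
    and w0: "w a = 0" and L: "L \<ge> 0" and \<beta>: "\<beta> \<ge> 0"
    and t: "t \<in> {a..b}"
  shows "norm (w t) \<le> \<beta> * (b - a) * exp (L * (b - a))"
proof -
  have cont: "continuous_on {a..b} w"
    using d unfolding continuous_on_eq_continuous_within by (meson has_vector_derivative_continuous)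
  then have contn: "continuous_on {a..b} (\<lambda>s. norm (w s))" by (intro continuous_intros)
  have key: "norm (w s) \<le> \<beta> * (b - a) + L * integral {a..s} (\<lambda>s. norm (w s))" if s: "s \<in> {a..b}" for s
  proof -
    have sub: "{a..s} \<subseteq> {a..b}" using s by auto
    have "(w' has_integral (w s - w a)) {a..s}"
      using s by (intro fundamental_theorem_of_calculus)
        (auto intro: has_vector_derivative_within_subset[OF d sub])
    then have I: "(w' has_integral w s) {a..s}" using w0 by simp
    have cn: "continuous_on {a..s} (\<lambda>r. L * norm (w r) + \<beta>)"
      by (intro continuous_intros continuous_on_subset[OF cont sub])
    have "norm (w s) = norm (integral {a..s} w')" using I by (simp add: integral_unique)
    also have "\<dots> \<le> integral {a..s} (\<lambda>r. L * norm (w r) + \<beta>)"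
      by (rule integral_norm_bound_integral)
        (use I has_integral_integrable integrable_continuous_real[OF cn] bnd sub in auto)
    also have "\<dots> = L * integral {a..s} (\<lambda>s. norm (w s)) + \<beta> * (s - a)"
    proof -
      have i1: "(\<lambda>r. L * norm (w r)) integrable_on {a..s}"
        by (intro integrable_continuous_real continuous_intros continuous_on_subset[OF cont sub])
      have "integral {a..s} (\<lambda>r. L * norm (w r) + \<beta>) = integral {a..s} (\<lambda>r. L * norm (w r)) + integral {a..s} (\<lambda>r. \<beta>)"
        by (rule integral_add[OF i1]) (rule integrable_const_ivl)
      then show ?thesis using s by simp
    qed
    also have "\<dots> \<le> \<beta> * (b - a) + L * integral {a..s} (\<lambda>s. norm (w s))"
      using s \<beta> by (simp add: mult_left_mono)
    finally show ?thesis .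
  qed
  have "norm (w t) \<le> \<beta> * (b - a) * exp (L * (t - a))"
    by (rule gronwall_core[OF contn L key t]) (use t in auto)
  also have "\<dots> \<le> \<beta> * (b - a) * exp (L * (b - a))"
    using t L \<beta> ab by (intro mult_left_mono) (auto intro: mult_left_mono)
  finally show ?thesis .
qed

lemma inner_vd:
  fixes f g :: "real \<Rightarrow> 'v::real_inner"
  assumes "(f has_vector_derivative f') (at x within s)" "(g has_vector_derivative g') (at x within s)"
  shows "((\<lambda>x. f x \<bullet> g x) has_real_derivative (f x \<bullet> g' + f' \<bullet> g x)) (at x within s)"
proof -
  have "((\<lambda>x. f x \<bullet> g x) has_derivative (\<lambda>h. f x \<bullet> (h *\<^sub>R g') + (h *\<^sub>R f') \<bullet> g x)) (at x within s)"
    using has_derivative_inner[OF assms[unfolded has_vector_derivative_def]] .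
  moreover have "(\<lambda>h. f x \<bullet> (h *\<^sub>R g') + (h *\<^sub>R f') \<bullet> g x) = (\<lambda>h. h * (f x \<bullet> g' + f' \<bullet> g x))"
    by (rule ext) (simp add: algebra_simps)
  moreover have "(\<lambda>h. h * (f x \<bullet> g' + f' \<bullet> g x)) = (*) (f x \<bullet> g' + f' \<bullet> g x)"
    by (rule ext) (simp add: mult.commute)
  ultimately show ?thesis unfolding has_field_derivative_def by metis
qed

lemma shift_vd:
  fixes f :: "real \<Rightarrow> 'v::real_normed_vector"
  assumes "(f has_vector_derivative f') (at (s + c))"
  shows "((\<lambda>s. f (s + c)) has_vector_derivative f') (at s)"
proof -
  have "((\<lambda>s. s + c) has_vector_derivative 1) (at s)"
    by (auto intro!: derivative_eq_intros)
  from vector_diff_chain_at[OF this] assms have "((f \<circ> (\<lambda>s. s + c)) has_vector_derivative (1 *\<^sub>R f')) (at s)" by simp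
  then show ?thesis by (simp add: o_def)
qed

lemma onorm_mat_le:
  fixes A :: "real^'n^'m"
  shows "onorm ((*v) A) \<le> real CARD('m) * real CARD('n) * norm A"
proof (rule onorm_le_matrix_component)
  fix i j
  have "\<bar>A $ i $ j\<bar> \<le> norm (A $ i)" by (rule component_le_norm_cart)
  also have "\<dots> \<le> norm A" by (rule Finite_Cartesian_Product.norm_nth_le)
  finally show "\<bar>A $ i $ j\<bar> \<le> norm A" .
qed

lemma dist3_le:
  fixes a a' :: "'a::metric_space" and b b' :: "'b::metric_space" and c c' :: "'c::metric_space"
  shows "dist (a, b, c) (a', b', c') \<le> dist a a' + dist b b' + dist c c'"
proof -
  have "dist (b, c) (b', c') \<le> dist b b' + dist c c'"
    unfolding dist_Pair_Pair by (rule sqrt_sum_squares_le_sum) auto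
  moreover have "dist (a, b, c) (a', b', c') \<le> dist a a' + dist (b, c) (b', c')"
    unfolding dist_Pair_Pair[of a "(b,c)"] by (rule sqrt_sum_squares_le_sum) auto
  ultimately show ?thesis by simp
qed

lemma neg_mat_vec: fixes A :: "real^'n^'m" shows "(- A) *v v = - (A *v v)"
  by (simp add: vec_eq_iff matrix_vector_mult_def sum_negf)

lemma adj_inner: fixes A :: "real^'n^'n" shows "((- transpose A) *v z) \<bullet> w = - (z \<bullet> (A *v w))"
  by (simp add: neg_mat_vec dot_lmul_matrix)




theorem corollary4:
  fixes f :: "real^'n \<Rightarrow> real^'n"
    and Df :: "real^'n \<Rightarrow> real^'n^'n"
    and g :: "real \<Rightarrow> real^'n \<Rightarrow> real \<Rightarrow> real^'n"
    and x0 :: "real \<Rightarrow> real^'n"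
    and x :: "real \<Rightarrow> real \<Rightarrow> real^'n"
    and z :: "real \<Rightarrow> real^'n"
    and T rho :: real
  assumes f_deriv: "\<And>y. (f has_derivative (\<lambda>h. Df y *v h)) (at y)"
    and Df_cont: "continuous_on UNIV Df"
    and g_cont: "continuous_on (UNIV \<times> UNIV \<times> {0..1}) (\<lambda>(t, y, e). g t y e)"
    and cycle: "periodic_orbit_least f x0 T"
    and nondeg: "nondegenerate_cycle Df x0 T"
    and x_sol: "\<And>e t. e \<in> {0<..1} \<Longrightarrow>
                  ((x e) has_vector_derivative (f (x e t) + e *\<^sub>R g t (x e t) e)) (at t)"
    and x_per: "\<And>e t. e \<in> {0<..1} \<Longrightarrow> x e (t + T) = x e t"
    and x_conv: "\<And>\<epsilon>. \<epsilon> > 0 \<Longrightarrow> \<exists>\<delta>>0. \<forall>e\<in>{0<..1}. e < \<delta> \<longrightarrow>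
                  (\<forall>t\<in>{0..T}. norm (x e t - x0 t) < \<epsilon>)"
    and z_eig: "eigenfunction (\<lambda>t. - transpose (Df (x0 t))) T z rho"
    and z_nonper: "\<not> (\<forall>t. z (t + T) = z t)"
    and M_nz: "rho / (rho - 1) * integral {-T..0} (\<lambda>s. z s \<bullet> g s (x0 s) 0) \<noteq> 0"
  shows "\<exists>\<delta>>0. \<forall>e. 0 < e \<and> e \<le> 1 \<and> e < \<delta> \<longrightarrow> (\<forall>t\<in>{0..T}. x e t \<noteq> x0 0)"
proof -
  from cycle have T: "T > 0" and dx0: "\<And>t. (x0 has_vector_derivative f (x0 t)) (at t)"
    and px0: "\<And>t. x0 (t + T) = x0 t" and least: "\<And>s. 0 < s \<Longrightarrow> s < T \<Longrightarrow> \<exists>t. x0 (t + s) \<noteq> x0 t"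
    unfolding periodic_orbit_least_def by auto
  have cx0: "continuous_on UNIV x0"
    using dx0 by (meson continuous_at_imp_continuous_on has_vector_derivative_continuous)
  obtain Bx where Bx: "\<And>t. norm (x0 t) \<le> Bx"
  proof -
    have "compact (x0 ` {0..T})" by (rule compact_continuous_image[OF continuous_on_subset[OF cx0]]) auto
    then obtain B where B: "\<forall>y\<in>x0 ` {0..T}. norm y \<le> B" by (meson compact_imp_bounded bounded_iff)
    have "norm (x0 t) \<le> B" for t
      using per_red[where p=x0 and T=T, OF px0, of t] red_range[OF T, of t] B by auto
    then show ?thesis using that by blast
  qed
  define R where "R = Bx + 1"
  define S where "S = cball (0::real^'n) R"
  have x0S: "x0 t \<in> S" for t using Bx[of t] unfolding S_def R_def by simp
  have cS: "compact S" "convex S" unfolding S_def by auto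
  have fdS: "(f has_derivative (\<lambda>h. Df y *v h)) (at y within A)" for y A
    using f_deriv has_derivative_at_withinI by blast
  obtain BD where BD: "\<And>y. y \<in> S \<Longrightarrow> norm (Df y) \<le> BD" and BD0: "BD \<ge> 0"
  proof -
    have "compact (Df ` S)" by (rule compact_continuous_image[OF continuous_on_subset[OF Df_cont] cS(1)]) auto
    then obtain B where B: "\<forall>y\<in>Df ` S. norm y \<le> B" by (meson compact_imp_bounded bounded_iff)
    show ?thesis by (rule that[of "max B 0"]) (use B in \<open>auto simp: le_max_iff_disj\<close>)
  qed
  define K0 where "K0 = real CARD('n) * real CARD('n)"
  have K0: "K0 \<ge> 0" unfolding K0_def by simp
  define L where "L = K0 * BD"
  have L: "L \<ge> 0" unfolding L_def using K0 BD0 by simp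
  have onb: "onorm ((*v) (Df y)) \<le> L" if "y \<in> S" for y
  proof -
    have "onorm ((*v) (Df y)) \<le> K0 * norm (Df y)" unfolding K0_def by (rule onorm_mat_le)
    also have "\<dots> \<le> K0 * BD" using BD[OF that] K0 by (rule mult_left_mono)
    finally show ?thesis unfolding L_def .
  qed
  have lip: "norm (f a - f b) \<le> L * norm (a - b)" if "a \<in> S" "b \<in> S" for a b
    by (rule differentiable_bound[OF cS(2) fdS onb that])
  have lin: "\<exists>\<rho>>0. \<forall>a b. a \<in> S \<longrightarrow> b \<in> S \<longrightarrow> norm (a - b) < \<rho> \<longrightarrow>
      norm (f a - f b - Df b *v (a - b)) \<le> norm (a - b) * (K0 * \<eta>)" if \<eta>0: "\<eta> > 0" for \<eta>
  proof -
    have "uniformly_continuous_on S Df"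
      by (rule compact_uniformly_continuous[OF continuous_on_subset[OF Df_cont] cS(1)]) simp
    then have "\<exists>\<rho>>0. \<forall>a\<in>S. \<forall>b\<in>S. dist a b < \<rho> \<longrightarrow> dist (Df a) (Df b) < \<eta>"
      unfolding uniformly_continuous_on_def using \<eta>0 by metis
    then obtain \<rho> where \<rho>: "\<rho> > 0" "\<And>a b. a \<in> S \<Longrightarrow> b \<in> S \<Longrightarrow> dist a b < \<rho> \<Longrightarrow> dist (Df a) (Df b) < \<eta>"
      by blast
    have "norm (f a - f b - Df b *v (a - b)) \<le> norm (a - b) * (K0 * \<eta>)"
      if a: "a \<in> S" and b: "b \<in> S" and ab: "norm (a - b) < \<rho>" for a b
    proof -
      define S' where "S' = S \<inter> ball b \<rho>"
      have seg: "b + t *\<^sub>R (a - b) \<in> S'" if t: "t \<in> {0..1}" for t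
      proof -
        have "b + t *\<^sub>R (a - b) = (1 - t) *\<^sub>R b + t *\<^sub>R a" by (simp add: algebra_simps)
        moreover have "(1 - t) *\<^sub>R b + t *\<^sub>R a \<in> S" using convexD[OF cS(2) b a] t by auto
        moreover have "dist b (b + t *\<^sub>R (a - b)) < \<rho>"
        proof -
          have "dist b (b + t *\<^sub>R (a - b)) = \<bar>t\<bar> * norm (a - b)" by (simp add: dist_norm)
          also have "\<dots> \<le> norm (a - b)" using t by (simp add: mult_left_le_one_le)
          finally show ?thesis using ab by simp
        qed
        ultimately show ?thesis unfolding S'_def by auto
      qed
      have der: "(f has_derivative (\<lambda>h. Df x *v h)) (at x within S')" if "x \<in> S'" for x
        by (rule fdS)
      have onm: "onorm ((\<lambda>h. Df x *v h) - (\<lambda>h. Df b *v h)) \<le> K0 * \<eta>" if x: "x \<in> S'" for x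
      proof -
        have "(\<lambda>h. Df x *v h) - (\<lambda>h. Df b *v h) = (*v) (Df x - Df b)"
          by (rule ext) (simp add: fun_diff_def matrix_vector_mult_diff_rdistrib)
        then have "onorm ((\<lambda>h. Df x *v h) - (\<lambda>h. Df b *v h)) = onorm ((*v) (Df x - Df b))" by simp
        also have "\<dots> \<le> K0 * norm (Df x - Df b)" unfolding K0_def by (rule onorm_mat_le)
        also have "\<dots> \<le> K0 * \<eta>"
        proof -
          have "dist x b < \<rho>" using x unfolding S'_def by (auto simp: dist_commute)
          then have "dist (Df x) (Df b) < \<eta>" using \<rho>(2)[of x b] x b unfolding S'_def by auto
          then show ?thesis using K0 by (simp add: dist_norm mult_left_mono)
        qed
        finally show ?thesis .
      qed
      have bS': "b \<in> S'" using b \<rho> unfolding S'_def by simp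
      show ?thesis
        using differentiable_bound_linearization[of b a S' f "\<lambda>x h. Df x *v h" b "K0 * \<eta>", OF seg der onm bS']
        by simp
    qed
    then show ?thesis using \<rho>(1) by blast
  qed
  have inj: "x0 \<tau> \<noteq> x0 0" if \<tau>: "0 < \<tau>" "\<tau> < T" for \<tau>
  proof
    assume eq: "x0 \<tau> = x0 0"
    define w where "w s = x0 (s + \<tau>) - x0 s" for s
    have wfun: "w = (\<lambda>s. x0 (s + \<tau>) - x0 s)" by (rule ext) (simp add: w_def)
    have dw: "(w has_vector_derivative (f (x0 (s + \<tau>)) - f (x0 s))) (at s within {0..T})" for s
      unfolding wfun by (rule has_vector_derivative_at_within, rule has_vector_derivative_diff[OF shift_vd[OF dx0] dx0])
    have wb: "norm (w s) \<le> 0 * (T - 0) * exp (L * (T - 0))" if "s \<in> {0..T}" for s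
    proof (rule gronwall_vec[OF _ dw _ _ L _ that])
      fix s show "norm (f (x0 (s + \<tau>)) - f (x0 s)) \<le> L * norm (w s) + 0"
        using lip[OF x0S x0S] unfolding w_def by simp
    qed (use T eq in \<open>auto simp: w_def\<close>)
    have w0: "x0 (s + \<tau>) = x0 s" if "s \<in> {0..T}" for s using wb[OF that] by (simp add: w_def)
    have "x0 (t + \<tau>) = x0 t" for t
    proof -
      have p2: "x0 (t + T + \<tau>) = x0 (t + \<tau>)" for t using px0[of "t + \<tau>"] by (simp add: algebra_simps)
      have "x0 (t + \<tau>) = x0 (red T t + \<tau>)"
        using per_red[where p="\<lambda>t. x0 (t + \<tau>)" and T=T, OF p2, of t] by simp
      also have "\<dots> = x0 (red T t)" using w0 red_range[OF T, of t] by auto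
      also have "\<dots> = x0 t" using per_red[where p=x0 and T=T, OF px0] by simp
      finally show ?thesis .
    qed
    then show False using least[OF \<tau>] by auto
  qed

  have sep: "\<exists>\<epsilon>'>0. \<forall>t\<in>{\<gamma>..T-\<gamma>}. \<epsilon>' \<le> norm (x0 t - x0 0)" if \<gamma>: "0 < \<gamma>" "2 * \<gamma> < T" for \<gamma>
  proof -
    have ne: "{\<gamma>..T-\<gamma>} \<noteq> {}" using \<gamma> by auto
    have cn: "continuous_on {\<gamma>..T-\<gamma>} (\<lambda>t. norm (x0 t - x0 0))"
      by (intro continuous_intros continuous_on_subset[OF cx0]) auto
    obtain t0 where t0: "t0 \<in> {\<gamma>..T-\<gamma>}" "\<forall>t\<in>{\<gamma>..T-\<gamma>}. norm (x0 t0 - x0 0) \<le> norm (x0 t - x0 0)"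
      using continuous_attains_inf[OF compact_Icc ne cn] by blast
    have "norm (x0 t0 - x0 0) > 0" using inj[of t0] t0(1) \<gamma> by auto
    then show ?thesis using t0(2) by blast
  qed
  have xconv: "\<exists>\<delta>>0. \<forall>e\<in>{0<..1}. e < \<delta> \<longrightarrow> (\<forall>t. norm (x e t - x0 t) < \<epsilon>)" if \<epsilon>: "\<epsilon> > 0" for \<epsilon>
  proof -
    obtain \<delta> where \<delta>: "\<delta> > 0" "\<forall>e\<in>{0<..1}. e < \<delta> \<longrightarrow> (\<forall>t\<in>{0..T}. norm (x e t - x0 t) < \<epsilon>)"
      using x_conv[OF \<epsilon>] by blast
    have "norm (x e t - x0 t) < \<epsilon>" if e: "e \<in> {0<..1}" "e < \<delta>" for e t
    proof -
      have p: "x e (t + T) - x0 (t + T) = x e t - x0 t" for t using x_per[OF e(1)] px0 by simp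
      have "x e t - x0 t = x e (red T t) - x0 (red T t)"
        using per_red[where p="\<lambda>t. x e t - x0 t" and T=T, OF p] by simp
      then show ?thesis using \<delta>(2) e red_range[OF T, of t] by auto
    qed
    then show ?thesis using \<delta>(1) by blast
  qed
  from z_eig have dz: "\<And>t. (z has_vector_derivative ((- transpose (Df (x0 t))) *v z t)) (at t)"
    unfolding eigenfunction_def by auto
  have cz: "continuous_on UNIV z"
    using dz by (meson continuous_at_imp_continuous_on has_vector_derivative_continuous)
  obtain Z where Z: "\<And>s. s \<in> {-T..0} \<Longrightarrow> norm (z s) \<le> Z" and Z0: "Z \<ge> 0"
  proof -
    have "compact (z ` {-T..0})" by (rule compact_continuous_image[OF continuous_on_subset[OF cz]]) auto
    then obtain B where B: "\<forall>y\<in>z ` {-T..0}. norm y \<le> B" by (meson compact_imp_bounded bounded_iff)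
    show ?thesis by (rule that[of "max B 0"]) (use B in \<open>auto simp: le_max_iff_disj\<close>)
  qed
  define D where "D = {-2*T..2*T} \<times> S \<times> {0..(1::real)}"
  have cD: "compact D" unfolding D_def using cS(1) by (intro compact_Times) auto
  have gD: "continuous_on D (\<lambda>(t, y, e). g t y e)"
    by (rule continuous_on_subset[OF g_cont]) (auto simp: D_def)
  obtain G where G: "\<And>t y e. (t, y, e) \<in> D \<Longrightarrow> norm (g t y e) \<le> G" and G0: "G \<ge> 0"
  proof -
    have "compact ((\<lambda>(t, y, e). g t y e) ` D)" by (rule compact_continuous_image[OF gD cD])
    then obtain B where B: "\<forall>v\<in>(\<lambda>(t, y, e). g t y e) ` D. norm v \<le> B" by (meson compact_imp_bounded bounded_iff)
    show ?thesis by (rule that[of "max B 0"]) (use B in \<open>force simp: le_max_iff_disj\<close>)+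
  qed
  have ug: "uniformly_continuous_on D (\<lambda>(t, y, e). g t y e)" by (rule compact_uniformly_continuous[OF gD cD])
  have ux0: "uniformly_continuous_on {-2*T..2*T} x0"
    by (rule compact_uniformly_continuous[OF continuous_on_subset[OF cx0]]) auto
  define I0 where "I0 = integral {-T..0} (\<lambda>s. z s \<bullet> g s (x0 s) 0)"
  have I0: "I0 \<noteq> 0" using M_nz unfolding I0_def by auto
  define m where "m = \<bar>I0\<bar>"
  have m: "m > 0" using I0 unfolding m_def by simp
  define C where "C = G * T * exp (L * T)"
  have C0: "C \<ge> 0" unfolding C_def using G0 T by simp
  define \<eta> where "\<eta> = m / (2 * (T * Z * C * K0 + 1))"
  have TZCK: "T * Z * C * K0 \<ge> 0" using T Z0 C0 K0 by simp
  have \<eta>: "\<eta> > 0" "T * Z * C * K0 * \<eta> < m / 2"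
  proof -
    show "\<eta> > 0" unfolding \<eta>_def using m TZCK by simp
    have "T * Z * C * K0 * \<eta> < (T * Z * C * K0 + 1) * \<eta>" using \<open>\<eta> > 0\<close> by (simp add: algebra_simps)
    also have "\<dots> = m / 2" unfolding \<eta>_def using TZCK by (simp add: field_simps)
    finally show "T * Z * C * K0 * \<eta> < m / 2" .
  qed
  obtain \<rho> where \<rho>: "\<rho> > 0" "\<And>a b. a \<in> S \<Longrightarrow> b \<in> S \<Longrightarrow> norm (a - b) < \<rho> \<Longrightarrow>
      norm (f a - f b - Df b *v (a - b)) \<le> norm (a - b) * (K0 * \<eta>)"
    using lin[OF \<eta>(1)] by blast
  define \<eta>' where "\<eta>' = m / (2 * (T * Z + 1))"
  have TZ: "T * Z \<ge> 0" using T Z0 by simp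
  have \<eta>': "\<eta>' > 0" "T * Z * \<eta>' < m / 2"
  proof -
    show "\<eta>' > 0" unfolding \<eta>'_def using m TZ by simp
    have "T * Z * \<eta>' < (T * Z + 1) * \<eta>'" using \<open>\<eta>' > 0\<close> by (simp add: algebra_simps)
    also have "\<dots> = m / 2" unfolding \<eta>'_def using TZ by (simp add: field_simps)
    finally show "T * Z * \<eta>' < m / 2" .
  qed
  obtain \<delta>g where \<delta>g: "\<delta>g > 0" "\<And>p p'. p \<in> D \<Longrightarrow> p' \<in> D \<Longrightarrow> dist p p' < \<delta>g \<Longrightarrow>
      dist ((\<lambda>(t, y, e). g t y e) p) ((\<lambda>(t, y, e). g t y e) p') < \<eta>'"
  proof -
    have "\<exists>d>0. \<forall>p\<in>D. \<forall>p'\<in>D. dist p p' < d \<longrightarrow> dist ((\<lambda>(t, y, e). g t y e) p) ((\<lambda>(t, y, e). g t y e) p') < \<eta>'"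
      using ug \<eta>'(1) unfolding uniformly_continuous_on_def by (metis dist_commute)
    then show ?thesis using that by blast
  qed
  obtain \<delta>x where \<delta>x: "\<delta>x > 0" "\<And>a b. a \<in> {-2*T..2*T} \<Longrightarrow> b \<in> {-2*T..2*T} \<Longrightarrow> dist a b < \<delta>x \<Longrightarrow>
      dist (x0 a) (x0 b) < \<delta>g / 6"
  proof -
    have "\<exists>d>0. \<forall>a\<in>{-2*T..2*T}. \<forall>b\<in>{-2*T..2*T}. dist a b < d \<longrightarrow> dist (x0 a) (x0 b) < \<delta>g / 6"
      using ux0 \<delta>g(1) unfolding uniformly_continuous_on_def by (metis dist_commute zero_less_divide_iff zero_less_numeral)
    then show ?thesis using that by blast
  qed
  define \<gamma> where "\<gamma> = min (T / 3) (min \<delta>x (\<delta>g / 3)) / 2"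
  have \<gamma>: "0 < \<gamma>" "2 * \<gamma> < T" "\<gamma> < \<delta>x" "\<gamma> < \<delta>g / 3" "\<gamma> < T"
    unfolding \<gamma>_def using T \<delta>x(1) \<delta>g(1) by auto
  obtain \<epsilon>' where \<epsilon>': "\<epsilon>' > 0" "\<forall>t\<in>{\<gamma>..T-\<gamma>}. \<epsilon>' \<le> norm (x0 t - x0 0)"
    using sep[OF \<gamma>(1,2)] by blast
  define \<epsilon>1 where "\<epsilon>1 = min 1 (min \<epsilon>' (\<delta>g / 6))"
  have \<epsilon>1: "\<epsilon>1 > 0" "\<epsilon>1 \<le> 1" "\<epsilon>1 \<le> \<epsilon>'" "\<epsilon>1 \<le> \<delta>g / 6" unfolding \<epsilon>1_def using \<epsilon>'(1) \<delta>g(1) by auto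
  obtain \<delta>1 where \<delta>1: "\<delta>1 > 0" "\<forall>e\<in>{0<..1}. e < \<delta>1 \<longrightarrow> (\<forall>t. norm (x e t - x0 t) < \<epsilon>1)"
    using xconv[OF \<epsilon>1(1)] by blast
  define \<delta> where "\<delta> = min \<delta>1 (min (\<rho> / (C + 1)) (\<delta>g / 3))"
  have \<delta>0: "\<delta> > 0" unfolding \<delta>_def using \<delta>1(1) \<rho>(1) C0 \<delta>g(1) by auto
  show ?thesis
  proof (intro exI[of _ \<delta>] conjI allI impI ballI)
    show "\<delta> > 0" by (rule \<delta>0)
    fix e t assume e: "0 < e \<and> e \<le> 1 \<and> e < \<delta>" and t: "t \<in> {0..T}"
    show "x e t \<noteq> x0 0"
    proof
      assume hit: "x e t = x0 0"
      have e01: "e \<in> {0<..1}" using e by auto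
      have eg: "e < \<delta>g / 3" "e * C < \<rho>" "e < \<delta>1"
      proof -
        show "e < \<delta>g / 3" "e < \<delta>1" using e unfolding \<delta>_def by auto
        have "e < \<rho> / (C + 1)" using e unfolding \<delta>_def by auto
        then have "e * (C + 1) < \<rho>" using C0 by (simp add: pos_less_divide_eq)
        then show "e * C < \<rho>" using e by (simp add: algebra_simps)
      qed
      have close: "norm (x e s - x0 s) < \<epsilon>1" for s using \<delta>1(2) e01 eg(3) by auto
      have lt: "norm (x0 t - x0 0) < \<epsilon>'" using close[of t] hit \<epsilon>1(3) by (simp add: norm_minus_commute)
      have t\<gamma>: "t < \<gamma> \<or> T - \<gamma> < t"
      proof (rule ccontr)
        assume "\<not> (t < \<gamma> \<or> T - \<gamma> < t)"
        then have "t \<in> {\<gamma>..T-\<gamma>}" by auto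
        with \<epsilon>'(2) have "\<epsilon>' \<le> norm (x0 t - x0 0)" by blast
        with lt show False by simp
      qed
      define \<tau> where "\<tau> = (if t < \<gamma> then t else t - T)"
      have \<tau>: "\<bar>\<tau>\<bar> < \<gamma>" using t\<gamma> t \<gamma> unfolding \<tau>_def by auto
      have hit\<tau>: "x e \<tau> = x0 0" using hit x_per[OF e01, of "t - T"] unfolding \<tau>_def by auto
      define u where "u s = x e (s + \<tau>)" for s
      define w where "w s = u s - x0 s" for s
      define gg where "gg s = g (s + \<tau>) (u s) e" for s
      have close2: "norm (u s - x0 (s + \<tau>)) < \<epsilon>1" for s unfolding u_def by (rule close)
      have uS: "u s \<in> S" for s
      proof -
        have "norm (u s) \<le> norm (x0 (s + \<tau>)) + norm (u s - x0 (s + \<tau>))" by (rule norm_triangle_sub)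
        also have "\<dots> \<le> Bx + 1" using Bx[of "s + \<tau>"] close2[of s] \<epsilon>1(2) by simp
        finally show ?thesis unfolding S_def R_def by simp
      qed
      have w0: "w 0 = 0" unfolding w_def u_def using hit\<tau> by simp
      have wT: "w (-T) = 0"
      proof -
        have "x e (-T + \<tau>) = x e \<tau>" using x_per[OF e01, of "-T + \<tau>"] by simp
        moreover have "x0 (-T) = x0 0" using px0[of "-T"] by simp
        ultimately show ?thesis unfolding w_def u_def using hit\<tau> by simp
      qed
      have du: "(u has_vector_derivative (f (u s) + e *\<^sub>R gg s)) (at s)" for s
        unfolding u_def[abs_def] gg_def u_def by (rule shift_vd) (rule x_sol[OF e01])
      have wfun: "w = (\<lambda>s. u s - x0 s)" by (rule ext) (simp add: w_def)
      have dw: "(w has_vector_derivative (f (u s) + e *\<^sub>R gg s - f (x0 s))) (at s)" for s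
        unfolding wfun by (rule has_vector_derivative_diff[OF du dx0])
      have Dmem: "(s + \<tau>, u s, e) \<in> D" if "s \<in> {-T..0}" for s
        using that \<tau> \<gamma> uS[of s] e unfolding D_def by auto
      have Dmem0: "(s, x0 s, 0) \<in> D" if "s \<in> {-T..0}" for s
        using that T x0S[of s] unfolding D_def by auto
      have ggb: "norm (gg s) \<le> G" if "s \<in> {-T..0}" for s
        unfolding gg_def by (rule G[OF Dmem[OF that]])
      have wb: "norm (w s) \<le> e * C" if s: "s \<in> {-T..0}" for s
      proof -
        have "norm (w s) \<le> (e * G) * (0 - -T) * exp (L * (0 - -T))"
        proof (rule gronwall_vec[OF _ has_vector_derivative_at_within[OF dw] _ wT L _ s])
          fix r assume r: "r \<in> {-T..0}"
          have "norm (f (u r) + e *\<^sub>R gg r - f (x0 r)) \<le> norm (f (u r) - f (x0 r)) + norm (e *\<^sub>R gg r)"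
            by (metis add_diff_eq diff_add_eq norm_triangle_ineq add.commute)
          also have "\<dots> \<le> L * norm (w r) + e * G"
          proof (rule add_mono)
            show "norm (f (u r) - f (x0 r)) \<le> L * norm (w r)" unfolding w_def by (rule lip[OF uS x0S])
            show "norm (e *\<^sub>R gg r) \<le> e * G" using ggb[OF r] e by (simp add: mult_left_mono)
          qed
          finally show "norm (f (u r) + e *\<^sub>R gg r - f (x0 r)) \<le> L * norm (w r) + e * G" .
        qed (use T e G0 in auto)
        then show ?thesis unfolding C_def by (simp add: algebra_simps)
      qed
      define r where "r s = f (u s) - f (x0 s) - Df (x0 s) *v w s" for s
      have rb: "norm (r s) \<le> e * C * (K0 * \<eta>)" if s: "s \<in> {-T..0}" for s
      proof -
        have wr: "norm (u s - x0 s) < \<rho>" using wb[OF s] eg(2) unfolding w_def by simp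
        have "norm (r s) \<le> norm (u s - x0 s) * (K0 * \<eta>)"
          unfolding r_def w_def by (rule \<rho>(2)[OF uS x0S wr])
        also have "\<dots> \<le> e * C * (K0 * \<eta>)"
          using wb[OF s] K0 \<eta>(1) unfolding w_def by (simp add: mult_right_mono)
        finally show ?thesis .
      qed
      define q where "q s = z s \<bullet> w s" for s
      have qfun: "q = (\<lambda>s. z s \<bullet> w s)" by (rule ext) (simp add: q_def)
      have dq: "(q has_vector_derivative (z s \<bullet> r s + e * (z s \<bullet> gg s))) (at s within {-T..0})" for s
      proof -
        have "(q has_real_derivative (z s \<bullet> (f (u s) + e *\<^sub>R gg s - f (x0 s)) + ((- transpose (Df (x0 s))) *v z s) \<bullet> w s)) (at s within {-T..0})"
          unfolding qfun by (rule inner_vd[OF has_vector_derivative_at_within[OF dz] has_vector_derivative_at_within[OF dw]])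
        moreover have "z s \<bullet> (f (u s) + e *\<^sub>R gg s - f (x0 s)) + ((- transpose (Df (x0 s))) *v z s) \<bullet> w s
            = z s \<bullet> r s + e * (z s \<bullet> gg s)"
          unfolding adj_inner r_def by (simp add: inner_diff_right inner_add_right algebra_simps)
        ultimately show ?thesis by (simp add: has_real_derivative_iff_has_vector_derivative)
      qed
      have int0: "((\<lambda>s. z s \<bullet> r s + e * (z s \<bullet> gg s)) has_integral 0) {-T..0}"
        using fundamental_theorem_of_calculus[of "-T" 0 q, OF _ dq] T w0 wT unfolding q_def by simp
      have cu: "continuous_on UNIV u"
        using du by (meson continuous_at_imp_continuous_on has_vector_derivative_continuous)
      have cgg: "continuous_on {-T..0} gg"
      proof -
        have "continuous_on {-T..0} (\<lambda>s. (s + \<tau>, u s, e))"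
          by (intro continuous_intros continuous_on_subset[OF cu]) auto
        then have "continuous_on {-T..0} ((\<lambda>(t, y, e). g t y e) \<circ> (\<lambda>s. (s + \<tau>, u s, e)))"
          by (rule continuous_on_compose) (rule continuous_on_subset[OF gD], use Dmem in auto)
        then show ?thesis unfolding gg_def[abs_def] o_def by simp
      qed
      have cg0: "continuous_on {-T..0} (\<lambda>s. g s (x0 s) 0)"
      proof -
        have "continuous_on {-T..0} (\<lambda>s. (s, x0 s, 0::real))"
          by (intro continuous_intros continuous_on_subset[OF cx0]) auto
        then have "continuous_on {-T..0} ((\<lambda>(t, y, e). g t y e) \<circ> (\<lambda>s. (s, x0 s, 0::real)))"
          by (rule continuous_on_compose) (rule continuous_on_subset[OF gD], use Dmem0 in auto)
        then show ?thesis unfolding o_def by simp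
      qed
      have czs: "continuous_on {-T..0} z" by (rule continuous_on_subset[OF cz]) auto
      have igg: "(\<lambda>s. z s \<bullet> gg s) integrable_on {-T..0}"
        by (intro integrable_continuous_real continuous_intros czs cgg)
      have ig0: "(\<lambda>s. z s \<bullet> g s (x0 s) 0) integrable_on {-T..0}"
        by (intro integrable_continuous_real continuous_intros czs cg0)
      define J where "J = integral {-T..0} (\<lambda>s. z s \<bullet> gg s)"
      have ir: "((\<lambda>s. z s \<bullet> r s) has_integral (- (e * J))) {-T..0}"
      proof -
        have "((\<lambda>s. e * (z s \<bullet> gg s)) has_integral e * J) {-T..0}"
          unfolding J_def by (rule has_integral_mult_right[OF integrable_integral[OF igg]])
        from has_integral_diff[OF int0 this] show ?thesis by simp
      qed
      have "norm (- (e * J)) \<le> (Z * (e * C * (K0 * \<eta>))) * Henstock_Kurzweil_Integration.content (cbox (-T) 0)"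
      proof (rule has_integral_bound)
        show "0 \<le> Z * (e * C * (K0 * \<eta>))" using Z0 e C0 K0 \<eta>(1) by simp
        show "((\<lambda>s. z s \<bullet> r s) has_integral - (e * J)) (cbox (-T) 0)" using ir by simp
        fix s assume "s \<in> cbox (-T) 0"
        then have s: "s \<in> {-T..0}" by simp
        have "norm (z s \<bullet> r s) \<le> norm (z s) * norm (r s)" by (simp add: Cauchy_Schwarz_ineq2)
        also have "\<dots> \<le> Z * (e * C * (K0 * \<eta>))"
          by (rule mult_mono[OF Z[OF s] rb[OF s] Z0 norm_ge_zero])
        finally show "norm (z s \<bullet> r s) \<le> Z * (e * C * (K0 * \<eta>))" .
      qed
      then have "e * \<bar>J\<bar> \<le> e * (T * Z * C * K0 * \<eta>)" using T e by (simp add: abs_mult algebra_simps)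
      then have Jb: "\<bar>J\<bar> < m / 2" using e \<eta>(2) by simp
      have dif: "((\<lambda>s. z s \<bullet> gg s - z s \<bullet> g s (x0 s) 0) has_integral (J - I0)) {-T..0}"
        unfolding J_def I0_def by (rule has_integral_diff[OF integrable_integral[OF igg] integrable_integral[OF ig0]])
      have "norm (J - I0) \<le> (Z * \<eta>') * Henstock_Kurzweil_Integration.content (cbox (-T) 0)"
      proof (rule has_integral_bound)
        show "0 \<le> Z * \<eta>'" using Z0 \<eta>'(1) by simp
        show "((\<lambda>s. z s \<bullet> gg s - z s \<bullet> g s (x0 s) 0) has_integral (J - I0)) (cbox (-T) 0)" using dif by simp
        fix s assume "s \<in> cbox (-T) 0"
        then have s: "s \<in> {-T..0}" by simp
        have "dist (s + \<tau>, u s, e) (s, x0 s, 0) < \<delta>g"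
        proof -
          have d3: "dist (s + \<tau>, u s, e) (s, x0 s, 0) \<le> dist (s + \<tau>) s + dist (u s) (x0 s) + dist e 0"
            by (rule dist3_le)
          have "dist (s + \<tau>) s < \<delta>g / 3" using \<tau> \<gamma> by (simp add: dist_real_def)
          moreover have "dist e 0 < \<delta>g / 3" using eg e by simp
          moreover have "dist (u s) (x0 s) < 2 * (\<delta>g / 6)"
          proof -
            have "dist (u s) (x0 s) \<le> dist (u s) (x0 (s + \<tau>)) + dist (x0 (s + \<tau>)) (x0 s)" by (rule dist_triangle)
            moreover have "dist (u s) (x0 (s + \<tau>)) < \<delta>g / 6" using close2[of s] \<epsilon>1(4) by (simp add: dist_norm)
            moreover have "dist (x0 (s + \<tau>)) (x0 s) < \<delta>g / 6"
              by (rule \<delta>x(2)) (use s \<tau> \<gamma> T in \<open>auto simp: dist_real_def\<close>)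
            ultimately show ?thesis by simp
          qed
          ultimately have "dist (s + \<tau>) s + dist (u s) (x0 s) + dist e 0 < \<delta>g" by linarith
          with d3 show ?thesis by (rule order_le_less_trans)
        qed
        then have "dist (gg s) (g s (x0 s) 0) < \<eta>'"
          using \<delta>g(2)[OF Dmem[OF s] Dmem0[OF s]] unfolding gg_def by simp
        then have gd: "norm (gg s - g s (x0 s) 0) \<le> \<eta>'" by (simp add: dist_norm)
        have "norm (z s \<bullet> gg s - z s \<bullet> g s (x0 s) 0) = norm (z s \<bullet> (gg s - g s (x0 s) 0))"
          by (simp add: inner_diff_right)
        also have "\<dots> \<le> norm (z s) * norm (gg s - g s (x0 s) 0)" by (simp add: Cauchy_Schwarz_ineq2)
        also have "\<dots> \<le> Z * \<eta>'" by (rule mult_mono[OF Z[OF s] gd Z0 norm_ge_zero])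
        finally show "norm (z s \<bullet> gg s - z s \<bullet> g s (x0 s) 0) \<le> Z * \<eta>'" .
      qed
      then have "\<bar>J - I0\<bar> \<le> T * Z * \<eta>'" using T by (simp add: algebra_simps)
      then have "\<bar>J - I0\<bar> < m / 2" using \<eta>'(2) by simp
      moreover have "m \<le> \<bar>J\<bar> + \<bar>J - I0\<bar>" unfolding m_def by linarith
      ultimately show False using Jb by simp
    qed
  qed
qed


end
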